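(* For all integers $m,n\ge 1$, $$P_{m-1} (n P_{n-1}-n P_{n}+P_{n})+P_{m} ((n+1) P_{n-1}+ 2 n P_{n}-(n-1) P_{n+1})+P_{m+1} ((n+1) P_{n}+n P_{n+1})= n (P_{m+n-1}+P_{m+n+1})+2 P_{m+n},$$ where $P_k$ denotes the $k$-th Pell number.
   Context: The Pell numbers are defined by $P_0=0$, $P_1=1$, $P_k=2P_{k-1}+P_{k-2}$ for $k\ge 2$. *)

theory Defs
  imports Main
begin

fun pell :: "nat \<Rightarrow> int" where
  "pell 0 = 0"
| "pell (Suc 0) = 1"
| "pell (Suc (Suc k)) = 2 * pell (Suc k) + pell k"

end

theory Submission
  imports Defs
begin

lemma pell_add: "pell (a + Suc b) = pell (Suc a) * pell (Suc b) + pell a * pell b"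
proof (induction b arbitrary: a rule: nat_less_induct)
  case (1 b)
  show ?case
  proof (cases b)
    case 0 then show ?thesis by simp
  next
    case (Suc c)
    note c = Suc
    show ?thesis
    proof (cases c)
      case 0 then show ?thesis using c by (simp add: algebra_simps)
    next
      case (Suc d)
      have h1: "pell (a + Suc c) = pell (Suc a) * pell (Suc c) + pell a * pell c" using 1 c by simp
      have h2: "pell (a + Suc d) = pell (Suc a) * pell (Suc d) + pell a * pell d" using 1 c Suc by simp
      have "pell (a + Suc b) = 2 * pell (a + Suc c) + pell (a + Suc d)"
        using c Suc by (simp add: add.commute)
      then show ?thesis using h1 h2 c Suc by (simp add: algebra_simps)
    qed
  qed
qed

theorem proposition7p5:
  fixes m n :: nat
  assumes "m \<ge> 1" and "n \<ge> 1"
  shows "pell (m - 1) * (int n * pell (n - 1) - int n * pell n + pell n)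
       + pell m * ((int n + 1) * pell (n - 1) + 2 * int n * pell n - (int n - 1) * pell (n + 1))
       + pell (m + 1) * ((int n + 1) * pell n + int n * pell (n + 1))
       = int n * (pell (m + n - 1) + pell (m + n + 1)) + 2 * pell (m + n)"
proof -
  obtain a where a: "m = Suc a" using assms(1) by (cases m) auto
  obtain b where b: "n = Suc b" using assms(2) by (cases n) auto
  have e1: "pell (m + n - 1) = pell (Suc a) * pell (Suc b) + pell a * pell b"
    using pell_add[of a b] a b by simp
  have e2: "pell (m + n) = pell (Suc a) * (2 * pell (Suc b) + pell b) + pell a * pell (Suc b)"
    using pell_add[of a "Suc b"] a b by simp
  have e3: "pell (m + n + 1) = (2 * pell (Suc a) + pell a) * (2 * pell (Suc b) + pell b) + pell (Suc a) * pell (Suc b)"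
    using pell_add[of "Suc a" "Suc b"] a b by simp
  have e4: "pell (m + 1) = 2 * pell (Suc a) + pell a" using a by simp
  have e5: "pell (n + 1) = 2 * pell (Suc b) + pell b" using b by simp
  show ?thesis unfolding e1 e2 e3 e4 e5 using a b by (simp add: algebra_simps)
qed

end
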